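(* Let $m$ be a positive integer and $u,v\in[m]^*$. Then $u\backsim_{[m]}v$ if and only if there exists a rearrangement map $f:\mathbb{P}^*\to\mathbb{P}^*$ that witnesses the Wilf equivalence $u\backsim v$.
   Context: $\mathbb{P}^*$ is the set of finite words over the positive integers (usual order), and $[m]^*\subseteq\mathbb{P}^*$ the words over $[m]=\{1,\ldots,m\}$. For words $u,w$, $u\le w$ (generalized factor order) if there are $|u|$ consecutive letters of $w$ whose $i$-th letter is $\ge$ the $i$-th letter of $u$ for each $i$; $\mathcal{F}(u)=\{w\in\mathbb{P}^*:u\le w\}$. With $\mathrm{wt}(w)=t^{n}x^{\sum_i w_i}$ for $w=w_1\ldots w_n$ and $F(u;t,x)=\sum_{w\in\mathcal{F}(u)}\mathrm{wt}(w)$, $u\backsim v$ iff $F(u;t,x)=F(v;t,x)$. For $w\in[m]^*$ let $c_i(w)$ be the number of occurrences of $i$ in $w$ and $W_{[m]}(w)=\prod_{i=1}^m x_i^{c_i(w)}$; $F(u;x_1,\ldots,x_m)=\sum_{w\in\mathcal{F}(u)\cap[m]^*}W_{[m]}(w)$, and $u\backsim_{[m]}v$ iff $F(u;x_1,\ldots,x_m)=F(v;x_1,\ldots,x_m)$. A rearrangement map witnessing $u\backsim v$ is a weight-preserving bijection $f:\mathbb{P}^*\to\mathbb{P}^*$ such that $f(w)$ is a rearrangement (permutation of the letters) of $w$ for every $w$, and $w\in\mathcal{F}(u)\iff f(w)\in\mathcal{F}(v)$. *)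

theory Defs
  imports "HOL-Library.Multiset"
begin

definition Pstar :: "nat list set" where
  "Pstar = {w. \<forall>a\<in>set w. 1 \<le> a}"

definition words_on :: "nat \<Rightarrow> nat list set" where
  "words_on m = {w. \<forall>a\<in>set w. 1 \<le> a \<and> a \<le> m}"

definition gfo_le :: "nat list \<Rightarrow> nat list \<Rightarrow> bool" where
  "gfo_le u w \<longleftrightarrow> (\<exists>i. i + length u \<le> length w \<and> (\<forall>j<length u. u ! j \<le> w ! (i + j)))"

definition Fset :: "nat list \<Rightarrow> nat list set" where
  "Fset u = {w \<in> Pstar. gfo_le u w}"

text \<open>u \<backsim>_[m] v: the generating functions F(u;x_1..x_m) and F(v;x_1..x_m) coincide,
  i.e. for each monomial (determined by the multiset of letters, i.e. the counts c_i)
  the coefficients agree.\<close>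
definition wilf_m :: "nat \<Rightarrow> nat list \<Rightarrow> nat list \<Rightarrow> bool" where
  "wilf_m m u v \<longleftrightarrow>
     (\<forall>M :: nat multiset.
        card {w \<in> Fset u \<inter> words_on m. mset w = M} =
        card {w \<in> Fset v \<inter> words_on m. mset w = M})"

definition rearrangement_map :: "(nat list \<Rightarrow> nat list) \<Rightarrow> nat list \<Rightarrow> nat list \<Rightarrow> bool" where
  "rearrangement_map f u v \<longleftrightarrow>
     bij_betw f Pstar Pstar \<and>
     (\<forall>w\<in>Pstar. mset (f w) = mset w) \<and>
     (\<forall>w\<in>Pstar. w \<in> Fset u \<longleftrightarrow> f w \<in> Fset v)"

end

theory Submission
  imports Defs
begin

fun merge :: "nat \<Rightarrow> nat list \<Rightarrow> nat list \<Rightarrow> nat list" where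
  "merge m [] r = []"
| "merge m (a#t) r = (if a = m then hd r # merge m t (tl r) else a # merge m t r)"

definition tr :: "nat \<Rightarrow> nat list \<Rightarrow> nat list" where
  "tr m w = map (min m) w"

definition rs :: "nat \<Rightarrow> nat list \<Rightarrow> nat list" where
  "rs m w = filter (\<lambda>a. m \<le> a) w"

lemma merge_tr_rs: "merge m (tr m w) (rs m w) = w"
  by (induction w) (auto simp: tr_def rs_def min_def)

lemma merge_props:
  assumes "\<forall>a\<in>set t. a \<le> m" "\<forall>a\<in>set r. m \<le> a" "count (mset t) m = length r"
  shows "tr m (merge m t r) = t \<and> rs m (merge m t r) = r \<and> set (merge m t r) \<subseteq> set t \<union> set r"
  using assms
proof (induction t arbitrary: r)
  case Nil
  then show ?case by (simp add: tr_def rs_def)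
next
  case (Cons a t)
  show ?case
  proof (cases "a = m")
    case True
    then obtain b r' where r: "r = b # r'" using Cons.prems by (cases r) auto
    have "tr m (merge m t r') = t \<and> rs m (merge m t r') = r' \<and> set (merge m t r') \<subseteq> set t \<union> set r'"
      using Cons.IH[of r'] Cons.prems True r by auto
    then show ?thesis using True r Cons.prems by (auto simp: tr_def rs_def min_def)
  next
    case False
    have "tr m (merge m t r) = t \<and> rs m (merge m t r) = r \<and> set (merge m t r) \<subseteq> set t \<union> set r"
      using Cons.IH[of r] Cons.prems False by auto
    then show ?thesis using False Cons.prems by (auto simp: tr_def rs_def min_def)
  qed
qed

lemma count_tr: "count (mset (tr m w)) m = length (rs m w)"
  by (induction w) (auto simp: tr_def rs_def min_def)

lemma mset_decomp: "mset w = filter_mset (\<lambda>a. a < m) (mset (tr m w)) + mset (rs m w)"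
  by (induction w) (auto simp: tr_def rs_def min_def)

lemma gfo_tr:
  assumes "u \<in> words_on m"
  shows "gfo_le u (tr m w) \<longleftrightarrow> gfo_le u w"
proof -
  have um: "\<And>j. j < length u \<Longrightarrow> u ! j \<le> m" using assms by (auto simp: words_on_def)
  have key: "\<And>i. i + length u \<le> length w \<Longrightarrow>
      (\<forall>j<length u. u ! j \<le> map (min m) w ! (i + j)) = (\<forall>j<length u. u ! j \<le> w ! (i + j))"
  proof -
    fix i assume i: "i + length u \<le> length w"
    show "(\<forall>j<length u. u ! j \<le> map (min m) w ! (i + j)) = (\<forall>j<length u. u ! j \<le> w ! (i + j))"
    proof (intro iffI allI impI)
      fix j assume h: "\<forall>j<length u. u ! j \<le> map (min m) w ! (i + j)" and j: "j < length u"
      have "i + j < length w" using i j by simp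
      then show "u ! j \<le> w ! (i + j)" using h j by auto
    next
      fix j assume h: "\<forall>j<length u. u ! j \<le> w ! (i + j)" and j: "j < length u"
      have "i + j < length w" using i j by simp
      then show "u ! j \<le> map (min m) w ! (i + j)" using h j um[OF j] by auto
    qed
  qed
  show ?thesis unfolding gfo_le_def tr_def length_map
    by (metis key)
qed

lemma finite_mset_eq: "finite {w :: nat list. mset w = M}"
proof -
  have "{w :: nat list. mset w = M} \<subseteq> {xs. set xs \<subseteq> set_mset M \<and> length xs = size M}"
    by auto
  moreover have "finite {xs. set xs \<subseteq> set_mset M \<and> length xs = size M}"
    by (rule finite_lists_length_eq) simp
  ultimately show ?thesis by (rule finite_subset)
qed


lemma exists_h:
  assumes "wilf_m m u v"
  shows "\<exists>h. bij_betw h {w \<in> words_on m. mset w = M} {w \<in> words_on m. mset w = M} \<and>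
     (\<forall>w\<in>{w \<in> words_on m. mset w = M}. w \<in> Fset u \<longleftrightarrow> h w \<in> Fset v)"
proof -
  define T where "T = {w \<in> words_on m. mset w = M}"
  have fin: "finite T" unfolding T_def by (rule finite_subset[OF _ finite_mset_eq[of M]]) auto
  have eq: "T \<inter> Fset u = {w \<in> Fset u \<inter> words_on m. mset w = M}"
           "T \<inter> Fset v = {w \<in> Fset v \<inter> words_on m. mset w = M}"
    unfolding T_def by auto
  have c1: "card (T \<inter> Fset u) = card (T \<inter> Fset v)"
    using assms unfolding wilf_m_def eq by blast
  have c2: "card (T - Fset u) = card (T - Fset v)"
  proof -
    have "T - Fset u = T - (T \<inter> Fset u)" "T - Fset v = T - (T \<inter> Fset v)" by auto
    then show ?thesis using c1 fin by (simp add: card_Diff_subset)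
  qed
  obtain h1 where h1: "bij_betw h1 (T \<inter> Fset u) (T \<inter> Fset v)"
    using finite_same_card_bij[OF _ _ c1] fin by blast
  obtain h2 where h2: "bij_betw h2 (T - Fset u) (T - Fset v)"
    using finite_same_card_bij[OF _ _ c2] fin by blast
  define h where "h = (\<lambda>w. if w \<in> Fset u then h1 w else h2 w)"
  have b1: "bij_betw h (T \<inter> Fset u) (T \<inter> Fset v)"
    using h1 by (rule bij_betw_cong[THEN iffD1, rotated]) (auto simp: h_def)
  have b2: "bij_betw h (T - Fset u) (T - Fset v)"
    using h2 by (rule bij_betw_cong[THEN iffD1, rotated]) (auto simp: h_def)
  have b: "bij_betw h ((T \<inter> Fset u) \<union> (T - Fset u)) ((T \<inter> Fset v) \<union> (T - Fset v))"
    by (rule bij_betw_combine[OF b1 b2]) auto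
  have "T \<inter> Fset u \<union> (T - Fset u) = T" "T \<inter> Fset v \<union> (T - Fset v) = T" by auto
  with b have bT: "bij_betw h T T" by simp
  have "\<forall>w\<in>T. w \<in> Fset u \<longleftrightarrow> h w \<in> Fset v"
  proof
    fix w assume w: "w \<in> T"
    show "w \<in> Fset u \<longleftrightarrow> h w \<in> Fset v"
    proof (cases "w \<in> Fset u")
      case True then show ?thesis using bij_betwE[OF b1] w by auto
    next
      case False then show ?thesis using bij_betwE[OF b2] w by auto
    qed
  qed
  with bT show ?thesis unfolding T_def by blast
qed

lemma words_on_Pstar: "words_on m \<subseteq> Pstar"
  by (auto simp: words_on_def Pstar_def)

lemma tr_words_on: "m \<ge> 1 \<Longrightarrow> w \<in> Pstar \<Longrightarrow> tr m w \<in> words_on m"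
  by (auto simp: tr_def words_on_def Pstar_def min_def)

lemma Fset_tr: "u \<in> words_on m \<Longrightarrow> m \<ge> 1 \<Longrightarrow> w \<in> Pstar \<Longrightarrow> tr m w \<in> Fset u \<longleftrightarrow> w \<in> Fset u"
  using gfo_tr[of u m w] tr_words_on[of m w] words_on_Pstar by (auto simp: Fset_def)

lemma forward:
  assumes m: "m \<ge> 1" and u: "u \<in> words_on m" and v: "v \<in> words_on m" and W: "wilf_m m u v"
  shows "\<exists>f. rearrangement_map f u v"
proof -
  define T where "T M = {w \<in> words_on m. mset w = M}" for M
  have "\<forall>M. \<exists>h. bij_betw h (T M) (T M) \<and> (\<forall>w\<in>T M. w \<in> Fset u \<longleftrightarrow> h w \<in> Fset v)"
    using exists_h[OF W] unfolding T_def by blast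
  then obtain H where H: "\<And>M. bij_betw (H M) (T M) (T M)"
    "\<And>M w. w \<in> T M \<Longrightarrow> w \<in> Fset u \<longleftrightarrow> H M w \<in> Fset v"
    by metis
  define g where "g w = H (mset w) w" for w
  have gT: "g t \<in> T (mset t)" if "t \<in> words_on m" for t
    using bij_betwE[OF H(1)] that unfolding g_def T_def by blast
  have gw: "g t \<in> words_on m" and gm: "mset (g t) = mset t" if "t \<in> words_on m" for t
    using gT[OF that] unfolding T_def by auto
  have gF: "t \<in> Fset u \<longleftrightarrow> g t \<in> Fset v" if "t \<in> words_on m" for t
    using H(2)[of t "mset t"] that unfolding g_def T_def by auto
  have ginj: "t = t'" if "t \<in> words_on m" "t' \<in> words_on m" "g t = g t'" for t t'
  proof -
    have "mset t = mset t'" using gm that by metis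
    then have "t' \<in> T (mset t)" "t \<in> T (mset t)" using that unfolding T_def by auto
    moreover have "H (mset t) t = H (mset t) t'" using that \<open>mset t = mset t'\<close> unfolding g_def by simp
    ultimately show ?thesis using bij_betw_imp_inj_on[OF H(1)] by (meson inj_onD)
  qed
  have gsurj: "\<exists>t\<in>words_on m. g t = t'" if "t' \<in> words_on m" for t'
  proof -
    have "t' \<in> T (mset t')" using that unfolding T_def by auto
    then obtain t where t: "t \<in> T (mset t')" "H (mset t') t = t'"
      using bij_betw_imp_surj_on[OF H(1)] by (metis imageE)
    then have "t \<in> words_on m" "g t = t'" unfolding g_def T_def by auto
    then show ?thesis by blast
  qed
  define f where "f w = merge m (g (tr m w)) (rs m w)" for w
  have fprops: "tr m (f w) = g (tr m w) \<and> rs m (f w) = rs m w \<and> mset (f w) = mset w \<and> f w \<in> Pstar"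
    if w: "w \<in> Pstar" for w
  proof -
    have tw: "tr m w \<in> words_on m" using tr_words_on[OF m w] .
    have a1: "\<forall>a\<in>set (g (tr m w)). a \<le> m" using gw[OF tw] by (auto simp: words_on_def)
    have a2: "\<forall>a\<in>set (rs m w). m \<le> a" by (auto simp: rs_def)
    have a3: "count (mset (g (tr m w))) m = length (rs m w)" using gm[OF tw] count_tr by metis
    have M: "tr m (f w) = g (tr m w)" "rs m (f w) = rs m w"
      using merge_props[OF a1 a2 a3] unfolding f_def by auto
    have ms: "mset (f w) = mset w"
      using mset_decomp[of "f w" m] mset_decomp[of w m] M gm[OF tw] by simp
    have "set (f w) = set w" using ms by (metis set_mset_mset)
    then have "f w \<in> Pstar" using w by (auto simp: Pstar_def)
    with M ms show ?thesis by blast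
  qed
  have inj: "inj_on f Pstar"
  proof
    fix w w' assume w: "w \<in> Pstar" and w': "w' \<in> Pstar" and e: "f w = f w'"
    have "g (tr m w) = g (tr m w')" using fprops[OF w] fprops[OF w'] e by metis
    then have "tr m w = tr m w'" using ginj tr_words_on[OF m w] tr_words_on[OF m w'] by blast
    moreover have "rs m w = rs m w'" using fprops[OF w] fprops[OF w'] e by metis
    ultimately show "w = w'" by (metis merge_tr_rs)
  qed
  have surj: "f ` Pstar = Pstar"
  proof
    show "f ` Pstar \<subseteq> Pstar" using fprops by auto
  next
    show "Pstar \<subseteq> f ` Pstar"
    proof
      fix w' assume w': "w' \<in> Pstar"
      obtain t where t: "t \<in> words_on m" "g t = tr m w'"
        using gsurj tr_words_on[OF m w'] by blast
      have a1: "\<forall>a\<in>set t. a \<le> m" using t by (auto simp: words_on_def)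
      have a2: "\<forall>a\<in>set (rs m w'). m \<le> a" by (auto simp: rs_def)
      have a3: "count (mset t) m = length (rs m w')" using gm[OF t(1)] t(2) count_tr by metis
      define w where "w = merge m t (rs m w')"
      have P: "tr m w = t" "rs m w = rs m w'" "set w \<subseteq> set t \<union> set (rs m w')"
        using merge_props[OF a1 a2 a3] unfolding w_def by auto
      have "w \<in> Pstar" using P(3) t(1) w' m by (auto simp: Pstar_def words_on_def rs_def)
      moreover have "f w = w'" unfolding f_def P t(2) by (rule merge_tr_rs)
      ultimately show "w' \<in> f ` Pstar" by blast
    qed
  qed
  have Fp: "w \<in> Fset u \<longleftrightarrow> f w \<in> Fset v" if w: "w \<in> Pstar" for w
  proof -
    have tw: "tr m w \<in> words_on m" using tr_words_on[OF m w] .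
    have "w \<in> Fset u \<longleftrightarrow> tr m w \<in> Fset u" using Fset_tr[OF u m w] by simp
    also have "\<dots> \<longleftrightarrow> g (tr m w) \<in> Fset v" using gF[OF tw] .
    also have "\<dots> \<longleftrightarrow> tr m (f w) \<in> Fset v" using fprops[OF w] by simp
    also have "\<dots> \<longleftrightarrow> f w \<in> Fset v" using Fset_tr[OF v m, of "f w"] fprops[OF w] by simp
    finally show ?thesis .
  qed
  have "rearrangement_map f u v"
    unfolding rearrangement_map_def bij_betw_def using inj surj fprops Fp by blast
  then show ?thesis by blast
qed

lemma backward:
  assumes R: "rearrangement_map f u v"
  shows "wilf_m m u v"
  unfolding wilf_m_def
proof
  fix M :: "nat multiset"
  define S where "S = {w \<in> Pstar. mset w = M}"
  have bij: "bij_betw f Pstar Pstar" and ms: "\<And>w. w \<in> Pstar \<Longrightarrow> mset (f w) = mset w"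
    and F: "\<And>w. w \<in> Pstar \<Longrightarrow> w \<in> Fset u \<longleftrightarrow> f w \<in> Fset v"
    using R unfolding rearrangement_map_def by auto
  have inj: "inj_on f Pstar" using bij bij_betw_imp_inj_on by blast
  have finS: "finite S" unfolding S_def by (rule finite_subset[OF _ finite_mset_eq[of M]]) auto
  have "f ` S \<subseteq> S" using ms bij_betwE[OF bij] unfolding S_def by auto
  moreover have "inj_on f S" using inj S_def by (auto intro: inj_on_subset)
  ultimately have fS: "f ` S = S" using finS by (simp add: endo_inj_surj)
  define A where "A x = {w \<in> Fset x \<inter> words_on m. mset w = M}" for x
  have sw: "\<And>w w'. set w = set w' \<Longrightarrow> w \<in> words_on m \<longleftrightarrow> w' \<in> words_on m"
    by (auto simp: words_on_def)
  have img: "f ` A u = A v"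
  proof
    show "f ` A u \<subseteq> A v"
    proof
      fix y assume "y \<in> f ` A u"
      then obtain x where x: "x \<in> A u" "y = f x" by blast
      have xP: "x \<in> Pstar" using x(1) unfolding A_def Fset_def by auto
      have "set y = set x" using ms[OF xP] x(2) by (metis set_mset_mset)
      moreover have "y \<in> Fset v" using F[OF xP] x unfolding A_def by auto
      moreover have "x \<in> words_on m" "mset x = M" using x(1) unfolding A_def by auto
      ultimately show "y \<in> A v" using x(2) ms[OF xP] sw[of y x] unfolding A_def by simp
    qed
  next
    show "A v \<subseteq> f ` A u"
    proof
      fix y assume y: "y \<in> A v"
      then have "y \<in> S" unfolding A_def S_def Fset_def by auto
      then obtain x where x: "x \<in> S" "y = f x" using fS by force
      have xP: "x \<in> Pstar" using x unfolding S_def by auto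
      have "set y = set x" using ms[OF xP] x(2) by (metis set_mset_mset)
      moreover have "x \<in> Fset u" using F[OF xP] x y unfolding A_def by auto
      moreover have "y \<in> words_on m" "mset y = M" using y unfolding A_def by auto
      ultimately have "x \<in> A u" using x ms[OF xP] sw[of y x] unfolding A_def S_def by simp
      then show "y \<in> f ` A u" using x by blast
    qed
  qed
  have "inj_on f (A u)" using inj by (rule inj_on_subset) (auto simp: A_def Fset_def)
  then have "card (A v) = card (A u)" using img card_image by metis
  then show "card (A u) = card (A v)" by simp
qed

theorem theorem8:
  fixes m :: nat and u v :: "nat list"
  assumes "m \<ge> 1" and "u \<in> words_on m" and "v \<in> words_on m"
  shows "wilf_m m u v \<longleftrightarrow> (\<exists>f. rearrangement_map f u v)"
  using forward[OF assms] backward by blast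

end
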